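(* Let $d\ge1$ and let $y=(y_S)_{S\in\mathcal{V}_{n,2d}}$ be a vector over $\mathbb{F}_q$. Suppose $H_d(y)$ is nonzero and $\operatorname{rank}H_d(y)\le d$. Then there exists $e\in\{0,1,\dots,d-1\}$ such that $r_e=r_{e+1}>0$.
   Context: $\mathbb{F}_q$ is a finite field. $\mathcal{V}_{n,j}:=\{S\subseteq\{1,\dots,n\}:0\le|S|\le j\}$ (including $\emptyset$). For $0\le e\le d$, $H_e(y)$ is the matrix with rows and columns indexed by $\mathcal{V}_{n,e}$ and $(S,T)$ entry $y_{S\cup T}$, and $r_e:=\operatorname{rank}H_e(y)$. *)

theory Defs
  imports Main
begin

definition Vset :: "nat \<Rightarrow> nat \<Rightarrow> nat set set" where
  "Vset n j = {S. S \<subseteq> {1..n} \<and> card S \<le> j}"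

definition cols_independent :: "'r set \<Rightarrow> ('r \<Rightarrow> 'c \<Rightarrow> 'a::field) \<Rightarrow> 'c set \<Rightarrow> bool" where
  "cols_independent R M J \<longleftrightarrow>
     (\<forall>a :: 'c \<Rightarrow> 'a. (\<forall>S\<in>R. (\<Sum>T\<in>J. a T * M S T) = 0) \<longrightarrow> (\<forall>T\<in>J. a T = 0))"

definition mat_rank :: "'r set \<Rightarrow> 'c set \<Rightarrow> ('r \<Rightarrow> 'c \<Rightarrow> 'a::field) \<Rightarrow> nat" where
  "mat_rank R C M = Max {card J | J. J \<subseteq> C \<and> cols_independent R M J}"

definition H :: "nat \<Rightarrow> nat \<Rightarrow> (nat set \<Rightarrow> 'a::field) \<Rightarrow> nat set \<Rightarrow> nat set \<Rightarrow> 'a" where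
  "H n e y = (\<lambda>S T. y (S \<union> T))"

definition hrank :: "nat \<Rightarrow> nat \<Rightarrow> (nat set \<Rightarrow> 'a::field) \<Rightarrow> nat" where
  "hrank n e y = mat_rank (Vset n e) (Vset n e) (H n e y)"

end

theory Submission
  imports Defs
begin

lemma finite_Vset: "finite (Vset n e)"
  by (rule finite_subset[of _ "Pow {1..n}"]) (auto simp: Vset_def)

lemma rank_fin: "finite C \<Longrightarrow> finite {card J | J. J \<subseteq> C \<and> cols_independent R M J}"
  by (rule finite_subset[of _ "card ` Pow C"]) auto

lemma rank_ge:
  assumes "finite C" "J \<subseteq> C" "cols_independent R M J"
  shows "card J \<le> mat_rank R C M"
  unfolding mat_rank_def using assms by (intro Max_ge rank_fin) auto

lemma rank_attained:
  assumes "finite C"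
  shows "\<exists>J. J \<subseteq> C \<and> cols_independent R M J \<and> card J = mat_rank R C M"
proof -
  have "{} \<subseteq> C \<and> cols_independent R M {}" by (simp add: cols_independent_def)
  hence ne: "{card J | J. J \<subseteq> C \<and> cols_independent R M J} \<noteq> {}" by blast
  have "Max {card J | J. J \<subseteq> C \<and> cols_independent R M J} \<in> {card J | J. J \<subseteq> C \<and> cols_independent R M J}"
    using rank_fin[OF assms] ne by (rule Max_in)
  then obtain J where "J \<subseteq> C" "cols_independent R M J" "card J = Max {card J | J. J \<subseteq> C \<and> cols_independent R M J}"
    by (smt (verit) mem_Collect_eq)
  thus ?thesis unfolding mat_rank_def by blast
qed

lemma indep_mono: "cols_independent R M J \<Longrightarrow> R \<subseteq> R' \<Longrightarrow> cols_independent R' M J"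
  unfolding cols_independent_def by blast

lemma Vset_mono: "e \<le> e' \<Longrightarrow> Vset n e \<subseteq> Vset n e'"
  unfolding Vset_def by auto

lemma hrank_mono: "hrank n e y \<le> hrank n (Suc e) y"
proof -
  from rank_attained[OF finite_Vset, of n e "Vset n e" "H n e y"]
  obtain J where J: "J \<subseteq> Vset n e" "cols_independent (Vset n e) (H n e y) J"
    "card J = mat_rank (Vset n e) (Vset n e) (H n e y)" by blast
  have HH: "H n (Suc e) y = H n e y" by (simp add: H_def)
  have "cols_independent (Vset n (Suc e)) (H n e y) J"
    using indep_mono[OF J(2) Vset_mono[of e "Suc e"]] by simp
  hence i2: "cols_independent (Vset n (Suc e)) (H n (Suc e) y) J" using HH by simp
  have s2: "J \<subseteq> Vset n (Suc e)" using J(1) Vset_mono[of e "Suc e" n] by simp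
  have "card J \<le> mat_rank (Vset n (Suc e)) (Vset n (Suc e)) (H n (Suc e) y)"
    by (rule rank_ge[OF finite_Vset s2 i2])
  thus ?thesis using J(3) unfolding hrank_def by simp
qed

lemma big_rank:
  fixes y :: "nat set \<Rightarrow> 'a::field"
  assumes "d \<ge> 1"
    and "\<exists>S\<in>Vset n d. \<exists>T\<in>Vset n d. H n d y S T \<noteq> 0"
  shows "\<exists>k\<le>d. hrank n k y \<ge> k + 1"
proof -
  define P where "P = {U. U \<subseteq> {1..n} \<and> card U \<le> 2*d \<and> y U \<noteq> 0}"
  obtain S T where ST: "S \<in> Vset n d" "T \<in> Vset n d" "y (S \<union> T) \<noteq> 0"
    using assms(2) by (auto simp: H_def)
  have fS: "finite S" "finite T" using ST by (auto simp: Vset_def intro: finite_subset)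
  have "card (S \<union> T) \<le> 2*d" using card_Un_le[of S T] ST(1,2) by (auto simp: Vset_def)
  hence "S \<union> T \<in> P" using ST by (auto simp: P_def Vset_def)
  then obtain U where U: "U \<in> P" and Umin: "\<And>V. V \<in> P \<Longrightarrow> card U \<le> card V"
    using ex_has_least_nat[of "\<lambda>U. U \<in> P" "S \<union> T" card] by blast
  have Usub: "U \<subseteq> {1..n}" and Ucard: "card U \<le> 2*d" and yU: "y U \<noteq> 0"
    using U by (auto simp: P_def)
  have fU: "finite U" using Usub by (rule finite_subset) auto
  have zero: "y V = 0" if "V \<subset> U" for V
  proof (rule ccontr)
    assume "y V \<noteq> 0"
    moreover have "card V < card U" using that fU by (simp add: psubset_card_mono)
    ultimately have "V \<in> P" using that Usub Ucard by (auto simp: P_def)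
    thus False using Umin \<open>card V < card U\<close> by fastforce
  qed
  consider "card U = 0" | "card U = 1" | "card U \<ge> 2" by linarith
  thus ?thesis
  proof cases
    case 1
    hence "U = {}" using fU by simp
    have J: "{{}} \<subseteq> Vset n 0" by (auto simp: Vset_def)
    have "cols_independent (Vset n 0) (H n 0 y) {{}}"
      unfolding cols_independent_def H_def
    proof (intro allI impI)
      fix a :: "nat set \<Rightarrow> 'a"
      assume h0: "\<forall>S\<in>Vset n 0. (\<Sum>T\<in>{{}}. a T * y (S \<union> T)) = 0"
      have "{} \<in> Vset n 0" using J by blast
      with h0 have "(\<Sum>T\<in>{{}}. a T * y ({} \<union> T)) = 0" by blast
      hence "a {} * y {} = 0" by simp
      thus "\<forall>T\<in>{{}}. a T = 0" using yU \<open>U = {}\<close> by simp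
    qed
    from rank_ge[OF finite_Vset J this] have "card {{}::nat set} \<le> hrank n 0 y" unfolding hrank_def .
    thus ?thesis by (intro exI[of _ 0]) simp
  next
    case 2
    then obtain u where u: "U = {u}" using card_1_singletonE by blast
    have y0: "y {} = 0" using zero u by auto
    have J: "{{}, {u}} \<subseteq> Vset n 1" using Usub u by (auto simp: Vset_def)
    have "cols_independent (Vset n 1) (H n 1 y) {{}, {u}}"
      unfolding cols_independent_def H_def
    proof (intro allI impI)
      fix a :: "nat set \<Rightarrow> 'a"
      assume h: "\<forall>S\<in>Vset n 1. (\<Sum>T\<in>{{}, {u}}. a T * y (S \<union> T)) = 0"
      have "{} \<in> Vset n 1" "{u} \<in> Vset n 1" using J by auto
      have ne: "{} \<noteq> {u}" by simp
      have "(\<Sum>T\<in>{{}, {u}}. a T * y ({} \<union> T)) = 0" using h \<open>{} \<in> Vset n 1\<close> by blast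
      hence e1: "a {} * y {} + a {u} * y {u} = 0" using ne by simp
      have "(\<Sum>T\<in>{{}, {u}}. a T * y ({u} \<union> T)) = 0" using h \<open>{u} \<in> Vset n 1\<close> by blast
      hence e2: "a {} * y {u} + a {u} * y {u} = 0" using ne by simp
      from e1 y0 yU u have "a {u} = 0" by simp
      with e2 yU u have "a {} = 0" by simp
      with \<open>a {u} = 0\<close> show "\<forall>T\<in>{{}, {u}}. a T = 0" by simp
    qed
    from rank_ge[OF finite_Vset J this] have "card {{}, {u::nat}} \<le> hrank n 1 y"
      unfolding hrank_def .
    thus ?thesis using assms(1) by (intro exI[of _ 1]) auto
  next
    case 3
    define m where "m = card U"
    define k where "k = (m + 1) div 2"
    have km: "k \<le> d" "m - k - 1 \<le> m" "m - (m - k - 1) = k + 1" "m - k - 1 + 1 \<le> k"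
      "m - (m - k - 1 + 1) \<le> k"
    proof -
      have "2*k = m \<or> 2*k = m+1" unfolding k_def by presburger
      moreover have "2 \<le> m" "m \<le> 2*d" using 3 Ucard m_def by auto
      ultimately show "k \<le> d" "m - k - 1 \<le> m" "m - (m - k - 1) = k + 1" "m - k - 1 + 1 \<le> k"
      "m - (m - k - 1 + 1) \<le> k" by linarith+
    qed
    obtain A where A: "A \<subseteq> U" "card A = m - k - 1"
      using obtain_subset_with_card_n[of "m - k - 1" U] km m_def by auto
    define W where "W = U - A"
    have fW: "finite W" using fU W_def by auto
    have cW: "card W = k + 1" using A fU km unfolding W_def m_def by (simp add: card_Diff_subset finite_subset)
    have fA: "finite A" using A fU finite_subset by blast
    define J where "J = (\<lambda>w. W - {w}) ` W"
    have inj: "inj_on (\<lambda>w. W - {w}) W" by (rule inj_onI) auto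
    have cJ: "card J = k + 1" using cW inj unfolding J_def by (simp add: card_image)
    have JV: "J \<subseteq> Vset n k"
    proof
      fix T assume "T \<in> J"
      then obtain w where w: "w \<in> W" "T = W - {w}" unfolding J_def by blast
      have "card T = k" using w cW fW by simp
      moreover have "T \<subseteq> {1..n}" using w Usub unfolding W_def by blast
      ultimately show "T \<in> Vset n k" unfolding Vset_def by simp
    qed
    have "cols_independent (Vset n k) (H n k y) J"
      unfolding cols_independent_def H_def
    proof (intro allI impI ballI)
      fix a :: "nat set \<Rightarrow> 'a" and T0
      assume h: "\<forall>S\<in>Vset n k. (\<Sum>T\<in>J. a T * y (S \<union> T)) = 0" and T0: "T0 \<in> J"
      then obtain w where w: "w \<in> W" "T0 = W - {w}" unfolding J_def by blast
      define S where "S = insert w A"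
      have "card S = m - k - 1 + 1" using A fA w unfolding S_def W_def by simp
      hence c: "card S \<le> k" using km(4) by simp
      have "S \<subseteq> {1..n}" using w A Usub unfolding S_def W_def by blast
      hence "S \<in> Vset n k" using c unfolding Vset_def by blast
      with h have s: "(\<Sum>T\<in>J. a T * y (S \<union> T)) = 0" by blast
      have fJ: "finite J" using fW J_def by simp
      have "(\<Sum>T\<in>J. a T * y (S \<union> T)) = a T0 * y (S \<union> T0) + (\<Sum>T\<in>J - {T0}. a T * y (S \<union> T))"
        using sum.remove[OF fJ T0] by simp
      also have "(\<Sum>T\<in>J - {T0}. a T * y (S \<union> T)) = 0"
      proof (rule sum.neutral, rule ballI)
        fix T assume "T \<in> J - {T0}"
        then obtain w' where w': "w' \<in> W" "T = W - {w'}" "w' \<noteq> w" using w unfolding J_def by blast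
        have "S \<union> T = U - {w'}" using w w' A unfolding S_def W_def by auto
        hence "S \<union> T \<subset> U" using w' W_def by auto
        thus "a T * y (S \<union> T) = 0" using zero by simp
      qed
      also have "S \<union> T0 = U" using w A unfolding S_def W_def by auto
      finally have "a T0 * y U = 0" using s by simp
      thus "a T0 = 0" using yU by simp
    qed
    from rank_ge[OF finite_Vset JV this] have "card J \<le> hrank n k y" unfolding hrank_def .
    hence "k + 1 \<le> hrank n k y" using cJ by simp
    thus ?thesis using km(1) by blast
  qed
qed

theorem lemma4p3:
  fixes y :: "nat set \<Rightarrow> 'a::{finite,field}" and n d :: nat
  assumes "d \<ge> 1"
    and "\<exists>S\<in>Vset n d. \<exists>T\<in>Vset n d. H n d y S T \<noteq> 0"
    and "hrank n d y \<le> d"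
  shows "\<exists>e\<in>{0..<d}. hrank n e y = hrank n (e+1) y \<and> hrank n e y > 0"
proof (rule ccontr)
  assume nc: "\<not> ?thesis"
  obtain k where k: "k \<le> d" "hrank n k y \<ge> k + 1" using big_rank[OF assms(1,2)] by blast
  have "k + j \<le> d \<Longrightarrow> hrank n (k + j) y \<ge> k + 1 + j" for j
  proof (induction j)
    case 0 thus ?case using k by simp
  next
    case (Suc j)
    hence IH: "hrank n (k + j) y \<ge> k + 1 + j" by simp
    have "k + j \<in> {0..<d}" using Suc.prems by simp
    with nc IH have "hrank n (k + j) y \<noteq> hrank n (k + j + 1) y" by auto
    with hrank_mono[of n "k + j" y] IH show ?case by simp
  qed
  from this[of "d - k"] k assms(3) show False by simp
qed

end
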